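(* Let $d\ge1$, $k\ge1$, and let $H$ be a balanced hypergraph of discrete $d$-intervals on the ground set $[k]=\{1,\dots,k\}$. Then $H$ contains a matching $M$ with $\sum_{m\in M}|m|\ge \frac{k}{2d}$.
   Context: A discrete $d$-interval on $[k]$ (with its natural linear order) is a union of at most $d$ pairwise disjoint nonempty sets of consecutive integers in $[k]$. A hypergraph of discrete $d$-intervals on $[k]$ is a finite family of such sets, regarded as a hypergraph on vertex set $[k]$. $H$ is balanced if there is $f:H\to\mathbb{R}_{\ge0}$ with $\sum_{h\ni v}f(h)=1$ for every $v\in[k]$. A matching is a set of pairwise disjoint edges. *)

theory Defs
  imports Complex_Main "HOL-Library.Disjoint_Sets"
begin

definition discrete_interval :: "nat \<Rightarrow> nat set \<Rightarrow> bool" where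
  "discrete_interval k J \<longleftrightarrow> (\<exists>a b. 1 \<le> a \<and> a \<le> b \<and> b \<le> k \<and> J = {a..b})"

definition discrete_d_interval :: "nat \<Rightarrow> nat \<Rightarrow> nat set \<Rightarrow> bool" where
  "discrete_d_interval d k S \<longleftrightarrow>
     (\<exists>I. finite I \<and> card I \<le> d \<and> (\<forall>J\<in>I. discrete_interval k J)
          \<and> pairwise disjnt I \<and> S = \<Union>I)"

definition d_interval_hypergraph :: "nat \<Rightarrow> nat \<Rightarrow> nat set set \<Rightarrow> bool" where
  "d_interval_hypergraph d k H \<longleftrightarrow> finite H \<and> (\<forall>h\<in>H. discrete_d_interval d k h)"

definition balanced :: "nat \<Rightarrow> nat set set \<Rightarrow> bool" where
  "balanced k H \<longleftrightarrow> (\<exists>f :: nat set \<Rightarrow> real. (\<forall>h\<in>H. f h \<ge> 0) \<and>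
       (\<forall>v\<in>{1..k}. (\<Sum>h\<in>{h\<in>H. v \<in> h}. f h) = 1))"

definition matching_in :: "nat set set \<Rightarrow> nat set set \<Rightarrow> bool" where
  "matching_in H M \<longleftrightarrow> M \<subseteq> H \<and> pairwise disjnt M"

end

theory Submission
  imports Defs
begin

definition Rends :: "nat set \<Rightarrow> nat set" where
  "Rends s = {p\<in>s. Suc p \<notin> s}"

lemma pair_lemma:
  assumes "finite g" "g \<inter> h \<noteq> {}"
  shows "Rends h \<inter> g \<noteq> {} \<or> Rends g \<inter> h \<noteq> {}"
proof -
  obtain p where p: "p \<in> g" "p \<in> h" using assms by blast
  define S where "S = {q. p \<le> q \<and> q \<in> g \<inter> h \<and> {p..q} \<subseteq> g \<inter> h}"
  have fS: "finite S" using assms(1) unfolding S_def by (rule rev_finite_subset) auto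
  have "p \<in> S" using p unfolding S_def by auto
  define q where "q = Max S"
  have qS: "q \<in> S" using Max_in[OF fS] \<open>p \<in> S\<close> q_def by blast
  have "Suc q \<notin> g \<inter> h"
  proof
    assume a: "Suc q \<in> g \<inter> h"
    have "{p..Suc q} = insert (Suc q) {p..q}" using qS unfolding S_def by auto
    then have "Suc q \<in> S" using a qS unfolding S_def by auto
    then have "Suc q \<le> q" using Max_ge[OF fS] q_def by blast
    then show False by simp
  qed
  then show ?thesis using qS unfolding S_def Rends_def by auto
qed

lemma dint_props:
  assumes "discrete_d_interval d k h"
  shows "h \<subseteq> {1..k}" "card (Rends h) \<le> d" "finite h"
proof -
  obtain I where I: "finite I" "card I \<le> d" "\<forall>J\<in>I. discrete_interval k J" "h = \<Union>I"
    using assms unfolding discrete_d_interval_def by blast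
  show hs: "h \<subseteq> {1..k}" using I unfolding discrete_interval_def by fastforce
  show "finite h" using hs finite_subset by blast
  have "Rends h \<subseteq> Max ` I"
  proof
    fix p assume "p \<in> Rends h"
    then have p: "p \<in> h" "Suc p \<notin> h" unfolding Rends_def by auto
    then obtain J where J: "J \<in> I" "p \<in> J" using I by auto
    then obtain a b where ab: "J = {a..b}" "a \<le> b" using I unfolding discrete_interval_def by blast
    have "p = b"
    proof (rule ccontr)
      assume "p \<noteq> b"
      then have "Suc p \<in> J" using J ab by auto
      then show False using p J I by auto
    qed
    have "Max {a..b} = b" using ab by (intro Max_eqI) auto
    then have "p = Max J" using ab \<open>p = b\<close> by simp
    then show "p \<in> Max ` I" using J by auto
  qed
  then have "card (Rends h) \<le> card (Max ` I)" using I by (simp add: card_mono)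
  also have "\<dots> \<le> card I" by (rule card_image_le[OF I(1)])
  finally show "card (Rends h) \<le> d" using I by simp
qed

lemma sum_Un_le_real:
  assumes "finite A" "finite B" "\<forall>x\<in>A\<union>B. (f x::real) \<ge> 0"
  shows "sum f (A \<union> B) \<le> sum f A + sum f B"
proof -
  have "sum f (A \<union> B) = sum f A + sum f B - sum f (A \<inter> B)"
    using sum_Un[OF assms(1,2)] by simp
  moreover have "sum f (A \<inter> B) \<ge> 0" using assms(3) by (intro sum_nonneg) auto
  ultimately show ?thesis by simp
qed

lemma union_bound:
  assumes "finite E" "finite P" "\<forall>g\<in>E. (x g::real) \<ge> 0"
  shows "(\<Sum>g\<in>{g\<in>E. P \<inter> g \<noteq> {}}. x g) \<le> (\<Sum>p\<in>P. \<Sum>g\<in>{g\<in>E. p \<in> g}. x g)"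
  using assms(2)
proof (induction P rule: finite_induct)
  case empty
  then show ?case by simp
next
  case (insert a P)
  have "{g\<in>E. insert a P \<inter> g \<noteq> {}} = {g\<in>E. a \<in> g} \<union> {g\<in>E. P \<inter> g \<noteq> {}}" by auto
  then have "(\<Sum>g\<in>{g\<in>E. insert a P \<inter> g \<noteq> {}}. x g)
      \<le> (\<Sum>g\<in>{g\<in>E. a \<in> g}. x g) + (\<Sum>g\<in>{g\<in>E. P \<inter> g \<noteq> {}}. x g)"
    using assms by (auto intro!: sum_Un_le_real)
  also have "\<dots> \<le> (\<Sum>g\<in>{g\<in>E. a \<in> g}. x g) + (\<Sum>p\<in>P. \<Sum>g\<in>{g\<in>E. p \<in> g}. x g)"
    using insert by simp
  finally show ?case using insert by simp
qed

lemma avg: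
  fixes x :: "nat set \<Rightarrow> real"
  assumes "finite E" "E \<noteq> {}"
    and props: "\<forall>g\<in>E. g \<noteq> {} \<and> finite g \<and> card (Rends g) \<le> d \<and> x g > 0"
    and cov: "\<forall>p. (\<Sum>g\<in>{g\<in>E. p\<in>g}. x g) \<le> 1"
  shows "\<exists>h\<in>E. (\<Sum>g\<in>{g\<in>E. g \<inter> h \<noteq> {}}. x g) \<le> 2 * real d"
proof (rule ccontr)
  assume "\<not> ?thesis"
  then have big: "\<forall>h\<in>E. (\<Sum>g\<in>{g\<in>E. g \<inter> h \<noteq> {}}. x g) > 2 * real d" by auto
  define N where "N h = (\<Sum>g\<in>{g\<in>E. g \<inter> h \<noteq> {}}. x g)" for h
  define B where "B h = (\<Sum>g\<in>{g\<in>E. Rends g \<inter> h \<noteq> {}}. x g)" for h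
  have xnn: "\<forall>g\<in>E. x g \<ge> 0" using props by (simp add: less_imp_le)
  have A: "(\<Sum>h\<in>E. x h * (2 * real d)) < (\<Sum>h\<in>E. x h * N h)"
    using assms(1,2) big props unfolding N_def
    by (intro sum_strict_mono) auto
  have Nb: "N h \<le> real d + B h" if h: "h \<in> E" for h
  proof -
    have fh: "finite h" using props h by auto
    have sub: "{g\<in>E. g \<inter> h \<noteq> {}} \<subseteq> {g\<in>E. Rends h \<inter> g \<noteq> {}} \<union> {g\<in>E. Rends g \<inter> h \<noteq> {}}"
    proof
      fix g assume "g \<in> {g\<in>E. g \<inter> h \<noteq> {}}"
      then have "g \<in> E" "g \<inter> h \<noteq> {}" by auto
      moreover have "finite g" using props \<open>g\<in>E\<close> by auto
      ultimately show "g \<in> {g\<in>E. Rends h \<inter> g \<noteq> {}} \<union> {g\<in>E. Rends g \<inter> h \<noteq> {}}"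
        using pair_lemma by blast
    qed
    have "N h \<le> (\<Sum>g\<in>{g\<in>E. Rends h \<inter> g \<noteq> {}} \<union> {g\<in>E. Rends g \<inter> h \<noteq> {}}. x g)"
      unfolding N_def using assms(1) xnn sub by (intro sum_mono2) auto
    also have "\<dots> \<le> (\<Sum>g\<in>{g\<in>E. Rends h \<inter> g \<noteq> {}}. x g) + B h"
      unfolding B_def using assms(1) xnn by (intro sum_Un_le_real) auto
    also have "(\<Sum>g\<in>{g\<in>E. Rends h \<inter> g \<noteq> {}}. x g) \<le> (\<Sum>p\<in>Rends h. \<Sum>g\<in>{g\<in>E. p \<in> g}. x g)"
      using fh assms(1) xnn by (intro union_bound) (auto simp: Rends_def)
    also have "\<dots> \<le> (\<Sum>p\<in>Rends h. 1)" using cov by (intro sum_mono) auto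
    also have "\<dots> \<le> real d" using props h by simp
    finally show ?thesis by simp
  qed
  have "(\<Sum>h\<in>E. x h * N h) \<le> (\<Sum>h\<in>E. x h * real d + x h * B h)"
    using Nb xnn by (intro sum_mono) (simp add: mult_left_mono flip: distrib_left)
  also have "\<dots> = (\<Sum>h\<in>E. x h * real d) + (\<Sum>h\<in>E. x h * B h)" by (simp add: sum.distrib)
  also have "(\<Sum>h\<in>E. x h * B h) = (\<Sum>h\<in>E. \<Sum>g\<in>E. if Rends g \<inter> h \<noteq> {} then x h * x g else 0)"
    unfolding B_def using assms(1)
    by (simp add: sum.inter_filter sum_distrib_left if_distrib cong: if_cong)
  also have "\<dots> = (\<Sum>g\<in>E. \<Sum>h\<in>E. if Rends g \<inter> h \<noteq> {} then x h * x g else 0)"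
    by (rule sum.swap)
  also have "\<dots> = (\<Sum>g\<in>E. x g * (\<Sum>h\<in>{h\<in>E. Rends g \<inter> h \<noteq> {}}. x h))"
    using assms(1)
    by (simp add: sum.inter_filter sum_distrib_left if_distrib mult.commute cong: if_cong)
  also have "\<dots> \<le> (\<Sum>g\<in>E. x g * real d)"
  proof (rule sum_mono)
    fix g assume g: "g \<in> E"
    have fg: "finite g" using props g by auto
    have "(\<Sum>h\<in>{h\<in>E. Rends g \<inter> h \<noteq> {}}. x h) \<le> (\<Sum>p\<in>Rends g. \<Sum>h\<in>{h\<in>E. p \<in> h}. x h)"
      using fg assms(1) xnn by (intro union_bound) (auto simp: Rends_def)
    also have "\<dots> \<le> (\<Sum>p\<in>Rends g. 1)" using cov by (intro sum_mono) auto
    also have "\<dots> \<le> real d" using props g by simp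
    finally show "x g * (\<Sum>h\<in>{h\<in>E. Rends g \<inter> h \<noteq> {}}. x h) \<le> x g * real d"
      using xnn g by (intro mult_left_mono) auto
  qed
  finally have "(\<Sum>h\<in>E. x h * N h) \<le> (\<Sum>h\<in>E. x h * (2 * real d))"
    by (simp add: sum_distrib_right[symmetric] sum_distrib_left[symmetric] algebra_simps)
  with A show False by simp
qed

lemma main_lemma:
  fixes d :: nat and x :: "nat set \<Rightarrow> real"
  shows "finite E \<Longrightarrow> \<forall>g\<in>E. g \<noteq> {} \<and> finite g \<and> card (Rends g) \<le> d \<and> x g \<ge> 0
    \<Longrightarrow> \<forall>p. (\<Sum>g\<in>{g\<in>E. p\<in>g}. x g) \<le> 1
    \<Longrightarrow> \<exists>M\<subseteq>E. pairwise disjnt M \<and> (\<Sum>h\<in>E. x h * w h) \<le> 2 * real d * (\<Sum>m\<in>M. w m)"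
proof (induction "card E" arbitrary: E w rule: less_induct)
  case (less E w)
  note fin = less.prems(1) and props = less.prems(2) and cov = less.prems(3)
  define E' where "E' = {h\<in>E. x h > 0 \<and> w h > 0}"
  have fE': "finite E'" using fin unfolding E'_def by simp
  have le1: "(\<Sum>h\<in>E. x h * w h) \<le> (\<Sum>h\<in>E'. x h * w h)"
  proof -
    have "(\<Sum>h\<in>E'. x h * w h) = (\<Sum>h\<in>E. if x h > 0 \<and> w h > 0 then x h * w h else 0)"
      unfolding E'_def using fin by (simp add: sum.inter_filter)
    moreover have "(\<Sum>h\<in>E. x h * w h) \<le> (\<Sum>h\<in>E. if x h > 0 \<and> w h > 0 then x h * w h else 0)"
    proof (rule sum_mono)
      fix h assume h: "h \<in> E"
      have "x h \<ge> 0" using props h by auto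
      then show "x h * w h \<le> (if x h > 0 \<and> w h > 0 then x h * w h else 0)"
        by (auto simp: mult_nonneg_nonpos)
    qed
    ultimately show ?thesis by simp
  qed
  show ?case
  proof (cases "E' = {}")
    case True
    then show ?thesis using le1 by (intro exI[of _ "{}"]) auto
  next
    case False
    have props': "\<forall>g\<in>E'. g \<noteq> {} \<and> finite g \<and> card (Rends g) \<le> d \<and> x g > 0"
      using props unfolding E'_def by auto
    have cov': "\<forall>p. (\<Sum>g\<in>{g\<in>E'. p\<in>g}. x g) \<le> 1"
    proof
      fix p
      have "(\<Sum>g\<in>{g\<in>E'. p\<in>g}. x g) \<le> (\<Sum>g\<in>{g\<in>E. p\<in>g}. x g)"
        using fin props unfolding E'_def by (intro sum_mono2) auto
      then show "(\<Sum>g\<in>{g\<in>E'. p\<in>g}. x g) \<le> 1" using cov by (meson order_trans)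
    qed
    obtain h where h: "h \<in> E'" and Nh: "(\<Sum>g\<in>{g\<in>E'. g \<inter> h \<noteq> {}}. x g) \<le> 2 * real d"
      using avg[OF fE' False props' cov'] by blast
    have hE: "h \<in> E" and hne: "h \<noteq> {}" and whp: "w h > 0" using h props unfolding E'_def by auto
    define w' where "w' g = (if g \<inter> h \<noteq> {} then w g - w h else w g)" for g
    define E'' where "E'' = E' - {h}"
    have sub'': "E'' \<subseteq> E" unfolding E''_def E'_def by auto
    have "card E'' < card E"
      using hE fin unfolding E''_def E'_def by (intro psubset_card_mono) auto
    moreover have "finite E''" using fE' unfolding E''_def by simp
    moreover have "\<forall>g\<in>E''. g \<noteq> {} \<and> finite g \<and> card (Rends g) \<le> d \<and> x g \<ge> 0"
      using props sub'' by auto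
    moreover have "\<forall>p. (\<Sum>g\<in>{g\<in>E''. p\<in>g}. x g) \<le> 1"
    proof
      fix p
      have "(\<Sum>g\<in>{g\<in>E''. p\<in>g}. x g) \<le> (\<Sum>g\<in>{g\<in>E. p\<in>g}. x g)"
        using fin props sub'' by (intro sum_mono2) auto
      then show "(\<Sum>g\<in>{g\<in>E''. p\<in>g}. x g) \<le> 1" using cov by (meson order_trans)
    qed
    ultimately obtain M' where M': "M' \<subseteq> E''" "pairwise disjnt M'"
      and IH: "(\<Sum>g\<in>E''. x g * w' g) \<le> 2 * real d * (\<Sum>m\<in>M'. w' m)"
      using less.hyps[of E'' w'] sub'' by blast
    have fM': "finite M'" using M'(1) \<open>finite E''\<close> finite_subset by blast
    have hM': "h \<notin> M'" using M'(1) unfolding E''_def by auto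
    have "(\<Sum>g\<in>E'. x g * w g) = (\<Sum>g\<in>E'. x g * w' g + (if g \<inter> h \<noteq> {} then x g * w h else 0))"
      unfolding w'_def by (intro sum.cong) (auto simp: algebra_simps)
    also have "\<dots> = (\<Sum>g\<in>E'. x g * w' g) + w h * (\<Sum>g\<in>{g\<in>E'. g \<inter> h \<noteq> {}}. x g)"
      using fE' by (simp add: sum.distrib sum.inter_filter sum_distrib_left, intro sum.cong) auto
    also have "(\<Sum>g\<in>E'. x g * w' g) = (\<Sum>g\<in>E''. x g * w' g) + x h * w' h"
      using fE' h unfolding E''_def by (simp add: sum.remove add.commute)
    also have "w' h = 0" using hne unfolding w'_def by simp
    finally have "(\<Sum>g\<in>E'. x g * w g) \<le> 2 * real d * (\<Sum>m\<in>M'. w' m) + w h * (2 * real d)"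
      using IH Nh whp by (smt (verit) mult_left_mono)
    then have key: "(\<Sum>g\<in>E. x g * w g) \<le> 2 * real d * ((\<Sum>m\<in>M'. w' m) + w h)"
      using le1 by (simp add: algebra_simps)
    have "\<exists>M\<subseteq>E. pairwise disjnt M \<and> (\<Sum>m\<in>M'. w' m) + w h \<le> (\<Sum>m\<in>M. w m)"
    proof (cases "\<exists>g\<in>M'. g \<inter> h \<noteq> {}")
      case True
      then obtain g0 where g0: "g0 \<in> M'" "g0 \<inter> h \<noteq> {}" by blast
      have "(\<Sum>m\<in>M'. w m) = (\<Sum>m\<in>M'. w' m + (if m \<inter> h \<noteq> {} then w h else 0))"
        unfolding w'_def by (intro sum.cong) auto
      also have "\<dots> = (\<Sum>m\<in>M'. w' m) + (\<Sum>m\<in>M'. (if m \<inter> h \<noteq> {} then w h else 0))"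
        by (simp add: sum.distrib)
      finally have eq: "(\<Sum>m\<in>M'. w m) = (\<Sum>m\<in>M'. w' m) + (\<Sum>m\<in>M'. (if m \<inter> h \<noteq> {} then w h else 0))" .
      have "w h \<le> (\<Sum>m\<in>M'. (if m \<inter> h \<noteq> {} then w h else 0))"
        using member_le_sum[of g0 M' "\<lambda>m. if m \<inter> h \<noteq> {} then w h else 0"] g0 fM' whp by auto
      then show ?thesis using eq M' sub'' by (intro exI[of _ M']) auto
    next
      case False
      have "(\<Sum>m\<in>M'. w m) = (\<Sum>m\<in>M'. w' m)"
        using False unfolding w'_def by (intro sum.cong) auto
      moreover have "(\<Sum>m\<in>insert h M'. w m) = w h + (\<Sum>m\<in>M'. w m)"
        using fM' hM' by simp
      moreover have "pairwise disjnt (insert h M')"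
        using M'(2) False by (auto simp: pairwise_insert disjnt_def)
      moreover have "insert h M' \<subseteq> E" using hE M' sub'' by auto
      ultimately show ?thesis by (intro exI[of _ "insert h M'"]) auto
    qed
    then obtain M where M: "M \<subseteq> E" "pairwise disjnt M" "(\<Sum>m\<in>M'. w' m) + w h \<le> (\<Sum>m\<in>M. w m)"
      by blast
    have "2 * real d * ((\<Sum>m\<in>M'. w' m) + w h) \<le> 2 * real d * (\<Sum>m\<in>M. w m)"
      using M(3) by (intro mult_left_mono) auto
    then show ?thesis using key M by (intro exI[of _ M]) auto
  qed
qed

theorem corollary5p2:
  fixes d k :: nat and H :: "nat set set"
  assumes "d \<ge> 1" and "k \<ge> 1"
    and "d_interval_hypergraph d k H"
    and "balanced k H"
  shows "\<exists>M. matching_in H M \<and> (\<Sum>m\<in>M. real (card m)) \<ge> real k / (2 * real d)"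
proof -
  have fH: "finite H" and dH: "\<forall>h\<in>H. discrete_d_interval d k h"
    using assms(3) unfolding d_interval_hypergraph_def by auto
  obtain f :: "nat set \<Rightarrow> real" where fnn: "\<forall>h\<in>H. f h \<ge> 0"
    and fb: "\<forall>v\<in>{1..k}. (\<Sum>h\<in>{h\<in>H. v \<in> h}. f h) = 1"
    using assms(4) unfolding balanced_def by blast
  have hsub: "\<forall>h\<in>H. h \<subseteq> {1..k}" and hR: "\<forall>h\<in>H. card (Rends h) \<le> d"
    and hfin: "\<forall>h\<in>H. finite h"
    using dint_props[of d k] dH by blast+
  define E where "E = {h\<in>H. h \<noteq> {}}"
  have fE: "finite E" using fH unfolding E_def by simp
  have propsE: "\<forall>g\<in>E. g \<noteq> {} \<and> finite g \<and> card (Rends g) \<le> d \<and> f g \<ge> 0"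
    using hR hfin fnn unfolding E_def by auto
  have covE: "\<forall>p. (\<Sum>g\<in>{g\<in>E. p\<in>g}. f g) \<le> 1"
  proof
    fix p
    have eqs: "{g\<in>E. p\<in>g} = {g\<in>H. p\<in>g}" unfolding E_def by auto
    show "(\<Sum>g\<in>{g\<in>E. p\<in>g}. f g) \<le> 1"
    proof (cases "p \<in> {1..k}")
      case True
      then show ?thesis using fb eqs by simp
    next
      case False
      then have "{g\<in>H. p\<in>g} = {}" using hsub by blast
      then show ?thesis using eqs by (simp only:) simp
    qed
  qed
  obtain M where M: "M \<subseteq> E" "pairwise disjnt M"
    and ineq: "(\<Sum>h\<in>E. f h * real (card h)) \<le> 2 * real d * (\<Sum>m\<in>M. real (card m))"
    using main_lemma[OF fE propsE covE, of "\<lambda>h. real (card h)"] by blast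
  have "(\<Sum>h\<in>E. f h * real (card h)) = (\<Sum>h\<in>H. f h * real (card h))"
    unfolding E_def using fH by (intro sum.mono_neutral_left) auto
  also have "\<dots> = (\<Sum>h\<in>H. \<Sum>v\<in>{1..k}. if v \<in> h then f h else 0)"
  proof (rule sum.cong)
    fix h assume h: "h \<in> H"
    have "card h = card {v\<in>{1..k}. v \<in> h}"
    proof -
      have "{v\<in>{1..k}. v \<in> h} = h" using hsub h by blast
      then show ?thesis by simp
    qed
    then have "real (card h) = (\<Sum>v\<in>{1..k}. if v \<in> h then 1 else 0)"
      by (simp add: sum.inter_filter[symmetric])
    then show "f h * real (card h) = (\<Sum>v\<in>{1..k}. if v \<in> h then f h else 0)"
      by (simp add: sum_distrib_left if_distrib cong: if_cong)
  qed simp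
  also have "\<dots> = (\<Sum>v\<in>{1..k}. \<Sum>h\<in>H. if v \<in> h then f h else 0)" by (rule sum.swap)
  also have "\<dots> = (\<Sum>v\<in>{1..k}. \<Sum>h\<in>{h\<in>H. v \<in> h}. f h)"
    using fH by (simp add: sum.inter_filter)
  also have "\<dots> = real k" using fb by simp
  finally have "real k \<le> 2 * real d * (\<Sum>m\<in>M. real (card m))" using ineq by simp
  moreover have "2 * real d > 0" using assms(1) by simp
  ultimately have "real k / (2 * real d) \<le> (\<Sum>m\<in>M. real (card m))"
    by (simp add: divide_le_eq mult.commute)
  moreover have "matching_in H M" using M unfolding matching_in_def E_def by auto
  ultimately show ?thesis by blast
qed

end
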